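(* Let $\mathbf A$ be a residuated semigroup balanced over $\mathbf I$. If $u_{a/b}=u_au_b$ holds for all $a,b\in A$, then $u_{ab}=u_au_b$ holds for all $a,b\in A$. Likewise, if $u_{b\backslash a}=u_au_b$ holds for all $a,b\in A$, then $u_{ab}=u_au_b$ holds for all $a,b\in A$.
   Context: A residuated semigroup is a structure $\langle A,\le,\cdot,\backslash,/\rangle$ where $\langle A,\le\rangle$ is a poset, $\langle A,\cdot\rangle$ is a semigroup, and $xy\le z\iff x\le z/y\iff y\le x\backslash z$. An element $p$ is positive if $a\le pa$ and $a\le ap$ for all $a$, idempotent if $pp=p$, central if $pa=ap$ for all $a$. Let $I$ be a nonempty set of central positive idempotents of $\mathbf A$ closed under multiplication ($\mathbf I=\langle I,\cdot\rangle$). $\mathbf A$ is balanced over $\mathbf I$ if for every $a\in A$ the element $u_a:=\max\{p\in I: pa=a\}$ exists (maximum w.r.t. $\le$). *)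

theory Defs
  imports Main
begin

text \<open>A residuated semigroup on the whole type 'a, given by order le,
 multiplication mult, left division ldiv (x\y = ldiv x y) and right division
 rdiv (x/y = rdiv x y).\<close>
definition residuated_semigroup ::
  "('a \<Rightarrow> 'a \<Rightarrow> bool) \<Rightarrow> ('a \<Rightarrow> 'a \<Rightarrow> 'a) \<Rightarrow> ('a \<Rightarrow> 'a \<Rightarrow> 'a) \<Rightarrow> ('a \<Rightarrow> 'a \<Rightarrow> 'a) \<Rightarrow> bool" where
  "residuated_semigroup le mult ldiv rdiv \<longleftrightarrow>
     (\<forall>x. le x x) \<and>
     (\<forall>x y. le x y \<and> le y x \<longrightarrow> x = y) \<and>
     (\<forall>x y z. le x y \<and> le y z \<longrightarrow> le x z) \<and>
     (\<forall>x y z. mult (mult x y) z = mult x (mult y z)) \<and>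
     (\<forall>x y z. (le (mult x y) z \<longleftrightarrow> le x (rdiv z y)) \<and>
              (le (mult x y) z \<longleftrightarrow> le y (ldiv x z)))"

definition positive_el :: "('a \<Rightarrow> 'a \<Rightarrow> bool) \<Rightarrow> ('a \<Rightarrow> 'a \<Rightarrow> 'a) \<Rightarrow> 'a \<Rightarrow> bool" where
  "positive_el le mult p \<longleftrightarrow> (\<forall>a. le a (mult p a) \<and> le a (mult a p))"

definition idempotent_el :: "('a \<Rightarrow> 'a \<Rightarrow> 'a) \<Rightarrow> 'a \<Rightarrow> bool" where
  "idempotent_el mult p \<longleftrightarrow> mult p p = p"

definition central_el :: "('a \<Rightarrow> 'a \<Rightarrow> 'a) \<Rightarrow> 'a \<Rightarrow> bool" where
  "central_el mult p \<longleftrightarrow> (\<forall>a. mult p a = mult a p)"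

definition idem_set :: "('a \<Rightarrow> 'a \<Rightarrow> bool) \<Rightarrow> ('a \<Rightarrow> 'a \<Rightarrow> 'a) \<Rightarrow> 'a set \<Rightarrow> bool" where
  "idem_set le mult I \<longleftrightarrow> I \<noteq> {} \<and>
     (\<forall>p\<in>I. central_el mult p \<and> positive_el le mult p \<and> idempotent_el mult p) \<and>
     (\<forall>p\<in>I. \<forall>q\<in>I. mult p q \<in> I)"

definition is_u :: "('a \<Rightarrow> 'a \<Rightarrow> bool) \<Rightarrow> ('a \<Rightarrow> 'a \<Rightarrow> 'a) \<Rightarrow> 'a set \<Rightarrow> 'a \<Rightarrow> 'a \<Rightarrow> bool" where
  "is_u le mult I a p \<longleftrightarrow> p \<in> I \<and> mult p a = a \<and> (\<forall>q\<in>I. mult q a = a \<longrightarrow> le q p)"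

definition balanced :: "('a \<Rightarrow> 'a \<Rightarrow> bool) \<Rightarrow> ('a \<Rightarrow> 'a \<Rightarrow> 'a) \<Rightarrow> 'a set \<Rightarrow> bool" where
  "balanced le mult I \<longleftrightarrow> (\<forall>a. \<exists>p. is_u le mult I a p)"

definition u_el :: "('a \<Rightarrow> 'a \<Rightarrow> bool) \<Rightarrow> ('a \<Rightarrow> 'a \<Rightarrow> 'a) \<Rightarrow> 'a set \<Rightarrow> 'a \<Rightarrow> 'a" where
  "u_el le mult I a = (THE p. is_u le mult I a p)"

end

theory Submission
  imports Defs
begin

theorem lemma6p5:
  fixes le :: "'a \<Rightarrow> 'a \<Rightarrow> bool" and mult ldiv rdiv :: "'a \<Rightarrow> 'a \<Rightarrow> 'a" and I :: "'a set"
  assumes "residuated_semigroup le mult ldiv rdiv"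
    and "idem_set le mult I"
    and "balanced le mult I"
  shows "((\<forall>a b. u_el le mult I (rdiv a b) = mult (u_el le mult I a) (u_el le mult I b))
            \<longrightarrow> (\<forall>a b. u_el le mult I (mult a b) = mult (u_el le mult I a) (u_el le mult I b)))
       \<and> ((\<forall>a b. u_el le mult I (ldiv b a) = mult (u_el le mult I a) (u_el le mult I b))
            \<longrightarrow> (\<forall>a b. u_el le mult I (mult a b) = mult (u_el le mult I a) (u_el le mult I b)))"
proof -
  have refl: "\<And>x. le x x" using assms(1) unfolding residuated_semigroup_def by blast
  have anti: "\<And>x y. le x y \<Longrightarrow> le y x \<Longrightarrow> x = y" using assms(1) unfolding residuated_semigroup_def by blast
  have assoc: "\<And>x y z. mult (mult x y) z = mult x (mult y z)" using assms(1) unfolding residuated_semigroup_def by blast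
  have res1: "\<And>x y z. le (mult x y) z \<longleftrightarrow> le x (rdiv z y)" using assms(1) unfolding residuated_semigroup_def by blast
  have res2: "\<And>x y z. le (mult x y) z \<longleftrightarrow> le y (ldiv x z)" using assms(1) unfolding residuated_semigroup_def by blast
  have cen: "\<And>p a. p \<in> I \<Longrightarrow> mult p a = mult a p" using assms(2) unfolding idem_set_def central_el_def by blast
  have pos: "\<And>p a. p \<in> I \<Longrightarrow> le a (mult a p)" using assms(2) unfolding idem_set_def positive_el_def by blast
  have idem: "\<And>p. p \<in> I \<Longrightarrow> mult p p = p" using assms(2) unfolding idem_set_def idempotent_el_def by blast
  have clos: "\<And>p q. p \<in> I \<Longrightarrow> q \<in> I \<Longrightarrow> mult p q \<in> I" using assms(2) unfolding idem_set_def by blast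
  define U where "U = u_el le mult I"
  have uniq: "\<And>x p p'. is_u le mult I x p \<Longrightarrow> is_u le mult I x p' \<Longrightarrow> p = p'"
    unfolding is_u_def using anti by blast
  have isU: "\<And>x. is_u le mult I x (U x)"
  proof -
    fix x
    obtain p where p: "is_u le mult I x p" using assms(3) unfolding balanced_def by blast
    have "U x = p" unfolding U_def u_el_def using p uniq by blast
    then show "is_u le mult I x (U x)" using p by simp
  qed
  have UI: "\<And>x. U x \<in> I" using isU unfolding is_u_def by blast
  have Ufix: "\<And>x. mult (U x) x = x" using isU unfolding is_u_def by blast
  have Ueq: "\<And>x p. is_u le mult I x p \<Longrightarrow> U x = p" using isU uniq by blast
  have Uid: "\<And>p. p \<in> I \<Longrightarrow> U p = p"
  proof -
    fix p assume pI: "p \<in> I"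
    have "is_u le mult I p p" unfolding is_u_def
    proof (intro conjI ballI impI)
      show "p \<in> I" by fact
      show "mult p p = p" using idem pI by blast
    next
      fix q assume "q \<in> I" "mult q p = p"
      then show "le q p" using pos[OF pI, of q] by simp
    qed
    then show "U p = p" using Ueq by blast
  qed
  have rr: "\<And>x y z. rdiv (rdiv x z) y = rdiv x (mult y z)"
  proof -
    fix x y z
    have e: "\<And>w. le w (rdiv (rdiv x z) y) \<longleftrightarrow> le w (rdiv x (mult y z))"
      using res1 assoc by metis
    show "rdiv (rdiv x z) y = rdiv x (mult y z)" using e refl anti by metis
  qed
  have ll: "\<And>x y z. ldiv (mult y z) x = ldiv z (ldiv y x)"
  proof -
    fix x y z
    have e: "\<And>w. le w (ldiv (mult y z) x) \<longleftrightarrow> le w (ldiv z (ldiv y x))"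
      using res2 assoc by metis
    show "ldiv (mult y z) x = ldiv z (ldiv y x)" using e refl anti by metis
  qed
  have alg: "\<And>p q. p \<in> I \<Longrightarrow> q \<in> I \<Longrightarrow> mult (mult (mult p q) q) p = mult p q"
  proof -
    fix p q assume pI: "p \<in> I" and qI: "q \<in> I"
    have "mult (mult (mult p q) q) p = mult (mult p (mult q q)) p" using assoc by simp
    also have "\<dots> = mult (mult p q) p" using idem qI by simp
    also have "\<dots> = mult p (mult p q)" using cen[OF pI, of "mult p q"] by simp
    also have "\<dots> = mult p q" using assoc idem pI by metis
    finally show "mult (mult (mult p q) q) p = mult p q" .
  qed
  have fin: "\<And>s p q. s \<in> I \<Longrightarrow> p \<in> I \<Longrightarrow> q \<in> I \<Longrightarrow> s = mult (mult s q) p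
      \<Longrightarrow> mult (mult p q) s = mult p q \<Longrightarrow> s = mult p q"
  proof -
    fix s p q assume sI: "s \<in> I" and pI: "p \<in> I" and qI: "q \<in> I"
      and h1: "s = mult (mult s q) p" and h2: "mult (mult p q) s = mult p q"
    have "s = mult s (mult q p)" using h1 assoc by metis
    also have "\<dots> = mult s (mult p q)" using cen pI by metis
    also have "\<dots> = mult (mult p q) s" using cen sI by metis
    also have "\<dots> = mult p q" by (fact h2)
    finally show "s = mult p q" .
  qed
  have part1: "\<forall>a b. U (mult a b) = mult (U a) (U b)" if H: "\<forall>a b. U (rdiv a b) = mult (U a) (U b)"
  proof (intro allI)
    fix a b
    let ?s = "U (mult a b)" and ?r = "mult (U a) (U b)"
    have rI: "?r \<in> I" using clos UI by blast
    have "?s = mult ?s ?s" using idem UI by metis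
    also have "\<dots> = U (rdiv (mult a b) (mult a b))" using H by metis
    also have "\<dots> = U (rdiv (rdiv (mult a b) b) a)" using rr by metis
    also have "\<dots> = mult (mult ?s (U b)) (U a)" using H by metis
    finally have h1: "?s = mult (mult ?s (U b)) (U a)" .
    have "mult ?r ?s = U (rdiv ?r (mult a b))" using H Uid[OF rI] by metis
    also have "\<dots> = U (rdiv (rdiv ?r b) a)" using rr by metis
    also have "\<dots> = mult (mult ?r (U b)) (U a)" using H Uid[OF rI] by metis
    also have "\<dots> = ?r" using alg UI by blast
    finally have h2: "mult ?r ?s = ?r" .
    show "?s = ?r" using fin[OF UI UI UI h1 h2] .
  qed
  have part2: "\<forall>a b. U (mult a b) = mult (U a) (U b)" if H: "\<forall>a b. U (ldiv b a) = mult (U a) (U b)"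
  proof (intro allI)
    fix a b
    let ?s = "U (mult a b)" and ?r = "mult (U a) (U b)"
    have rI: "?r \<in> I" using clos UI by blast
    have "?s = mult ?s ?s" using idem UI by metis
    also have "\<dots> = U (ldiv (mult a b) (mult a b))" using H by metis
    also have "\<dots> = U (ldiv b (ldiv a (mult a b)))" using ll by metis
    also have "\<dots> = mult (mult ?s (U a)) (U b)" using H by metis
    finally have h1: "?s = mult (mult ?s (U a)) (U b)" .
    have "mult ?r ?s = U (ldiv (mult a b) ?r)" using H Uid[OF rI] by metis
    also have "\<dots> = U (ldiv b (ldiv a ?r))" using ll by metis
    also have "\<dots> = mult (mult ?r (U a)) (U b)" using H Uid[OF rI] by metis
    also have "\<dots> = ?r"
    proof -
      have "mult (mult ?r (U a)) (U b) = mult (U a) (mult (mult (U b) (U a)) (U b))"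
        using assoc by metis
      also have "\<dots> = mult (U a) (mult (U b) (U a))" using alg[of "U b" "U a"] UI assoc idem by metis
      also have "\<dots> = ?r" using cen UI assoc idem by metis
      finally show ?thesis .
    qed
    finally have h2: "mult ?r ?s = ?r" .
    have h1': "?s = mult (mult ?s (U b)) (U a)"
      using h1 assoc cen UI by metis
    show "?s = ?r" using fin[OF UI UI UI h1' h2] .
  qed
  show ?thesis using part1 part2 unfolding U_def by blast
qed

end
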